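(* Let $x\in\mathcal D$ be such that $q_n(t)=\sum_{i:\,t^n_i\le t}(x(t^n_{i+1})-x(t^n_i))^2$ converges pointwise on $[0,\infty)$ to a function $q$ satisfying $q(t)=q^c(t)+\sum_{u\le t}(\Delta x(u))^2$ with $q^c$ continuous and nondecreasing. Then $q_n\to q$ in the Skorokhod $J_1$ topology.
   Context: Let $\pi=(\pi_n)_{n\ge1}$ be a sequence of partitions $\pi_n=(t^n_0,\dots,t^n_{k_n})$ with $0=t^n_0<\dots<t^n_{k_n}<\infty$, $t^n_{k_n}\uparrow\infty$, and mesh tending to $0$ on compacts; sums over $i$ run over $0\le i<k_n$. $\mathcal D$ is the space of càdlàg functions $[0,\infty)\to\mathbb R$, with the Skorokhod $J_1$ topology; $\Delta x(u)=x(u)-x(u-)$. *)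

theory Defs
  imports "HOL-Analysis.Analysis"
begin

text \<open>Cadlag functions on [0,oo) (represented as real functions; values on negative reals irrelevant).\<close>
definition cadlag :: "(real \<Rightarrow> real) \<Rightarrow> bool" where
  "cadlag x \<longleftrightarrow>
     (\<forall>t\<ge>0. (x \<longlongrightarrow> x t) (at_right t)) \<and>
     (\<forall>t>0. \<exists>l. (x \<longlongrightarrow> l) (at_left t))"

text \<open>Jump Delta x(u) = x(u) - x(u-), with the convention x(0-) = x(0).\<close>
definition jump :: "(real \<Rightarrow> real) \<Rightarrow> real \<Rightarrow> real" where
  "jump x u = (if u > 0 then x u - Lim (at_left u) x else 0)"

text \<open>Sequence of partitions: pi_n = (t n 0, ..., t n (k n)).\<close>
definition partition_seq :: "(nat \<Rightarrow> nat \<Rightarrow> real) \<Rightarrow> (nat \<Rightarrow> nat) \<Rightarrow> bool" where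
  "partition_seq t k \<longleftrightarrow>
     (\<forall>n. t n 0 = 0) \<and>
     (\<forall>n i. i < k n \<longrightarrow> t n i < t n (Suc i)) \<and>
     mono (\<lambda>n. t n (k n)) \<and>
     filterlim (\<lambda>n. t n (k n)) at_top sequentially \<and>
     (\<forall>T. \<forall>e>0. \<forall>\<^sub>F n in sequentially.
        \<forall>i<k n. t n i \<le> T \<longrightarrow> t n (Suc i) - t n i \<le> e)"

definition qv_approx :: "(nat \<Rightarrow> nat \<Rightarrow> real) \<Rightarrow> (nat \<Rightarrow> nat) \<Rightarrow> (real \<Rightarrow> real) \<Rightarrow> nat \<Rightarrow> real \<Rightarrow> real" where
  "qv_approx t k x n s = (\<Sum>i\<in>{i. i < k n \<and> t n i \<le> s}. (x (t n (Suc i)) - x (t n i))^2)"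

definition time_change :: "(real \<Rightarrow> real) \<Rightarrow> bool" where
  "time_change l \<longleftrightarrow> continuous_on {0..} l \<and> strict_mono_on {0..} l \<and> l 0 = 0 \<and> l ` {0..} = {0..}"

text \<open>Convergence of a sequence in D[0,oo) with the Skorokhod J1 topology
  (sequential characterization, Jacod-Shiryaev VI.1.14).\<close>
definition J1_tendsto :: "(nat \<Rightarrow> real \<Rightarrow> real) \<Rightarrow> (real \<Rightarrow> real) \<Rightarrow> bool" where
  "J1_tendsto f g \<longleftrightarrow>
     (\<exists>l. (\<forall>n. time_change (l n)) \<and>
          (\<forall>e>0. \<forall>\<^sub>F n in sequentially. \<forall>s\<ge>0. \<bar>l n s - s\<bar> \<le> e) \<and>
          (\<forall>T\<ge>0. \<forall>e>0. \<forall>\<^sub>F n in sequentially. \<forall>s\<in>{0..T}. \<bar>f n (l n s) - g s\<bar> \<le> e))"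

end

theory Submission
  imports Defs
begin


definition tent :: "real \<Rightarrow> real \<Rightarrow> real \<Rightarrow> real" where
  "tent r u s = max 0 (1 - \<bar>s - u\<bar> / r)"

lemma tent_lip:
  assumes "r > 0" shows "\<bar>tent r u s' - tent r u s\<bar> \<le> \<bar>s' - s\<bar> / r"
proof -
  have "\<bar>(1 - \<bar>s' - u\<bar> / r) - (1 - \<bar>s - u\<bar> / r)\<bar> = \<bar>\<bar>s - u\<bar> - \<bar>s' - u\<bar>\<bar> / r"
  proof -
    have "(1 - \<bar>s' - u\<bar> / r) - (1 - \<bar>s - u\<bar> / r) = (\<bar>s - u\<bar> - \<bar>s' - u\<bar>) / r"
      by (simp add: diff_divide_distrib)
    then show ?thesis using assms by simp
  qed
  also have "\<dots> \<le> \<bar>s' - s\<bar> / r" using assms by (intro divide_right_mono) auto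
  finally show ?thesis unfolding tent_def by linarith
qed

lemma tent_bounds: "r > 0 \<Longrightarrow> 0 \<le> tent r u s \<and> tent r u s \<le> 1"
  unfolding tent_def by auto

lemma tent_zero: "r > 0 \<Longrightarrow> r \<le> \<bar>s - u\<bar> \<Longrightarrow> tent r u s = 0"
  unfolding tent_def by (auto simp: field_simps)

lemma tent_one: "tent r u u = 1"
  unfolding tent_def by auto

lemma time_change_id: "time_change (\<lambda>s. s)"
  unfolding time_change_def by (auto simp: strict_mono_on_def)

lemma tent_time_change:
  fixes F :: "real set" and c :: "real \<Rightarrow> real" and r :: real
  defines "l \<equiv> (\<lambda>s. s - (\<Sum>u\<in>F. c u * tent r u s))"
  assumes fin: "finite F" and r: "r > 0" and F0: "\<forall>u\<in>F. r \<le> \<bar>u\<bar>"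
    and small: "(\<Sum>u\<in>F. \<bar>c u\<bar>) < r"
  shows "time_change l" "\<And>s. \<bar>l s - s\<bar> \<le> (\<Sum>u\<in>F. \<bar>c u\<bar>)"
    "\<And>s s'. s < s' \<Longrightarrow> l s < l s'"
proof -
  define C where "C = (\<Sum>u\<in>F. \<bar>c u\<bar>)"
  have C0: "0 \<le> C" unfolding C_def by (simp add: sum_nonneg)
  have dev: "\<bar>l s - s\<bar> \<le> C" for s
  proof -
    have "\<bar>l s - s\<bar> = \<bar>\<Sum>u\<in>F. c u * tent r u s\<bar>" unfolding l_def by simp
    also have "\<dots> \<le> (\<Sum>u\<in>F. \<bar>c u * tent r u s\<bar>)" by (rule sum_abs)
    also have "\<dots> \<le> C" unfolding C_def
      by (intro sum_mono) (use tent_bounds[OF r] in \<open>auto simp: abs_mult intro: mult_left_le\<close>)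
    finally show ?thesis .
  qed
  then show "\<bar>l s - s\<bar> \<le> (\<Sum>u\<in>F. \<bar>c u\<bar>)" for s unfolding C_def .
  show sm: "l s < l s'" if "s < s'" for s s'
  proof -
    have "\<bar>(\<Sum>u\<in>F. c u * tent r u s') - (\<Sum>u\<in>F. c u * tent r u s)\<bar>
        = \<bar>\<Sum>u\<in>F. c u * (tent r u s' - tent r u s)\<bar>"
      by (simp add: sum_subtractf right_diff_distrib)
    also have "\<dots> \<le> (\<Sum>u\<in>F. \<bar>c u * (tent r u s' - tent r u s)\<bar>)" by (rule sum_abs)
    also have "\<dots> \<le> (\<Sum>u\<in>F. \<bar>c u\<bar> * (\<bar>s' - s\<bar> / r))"
      by (intro sum_mono) (use tent_lip[OF r] in \<open>auto simp: abs_mult times_divide_eq_right[symmetric] intro!: mult_left_mono simp del: times_divide_eq_right\<close>)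
    also have "\<dots> = C * (\<bar>s' - s\<bar> / r)" unfolding C_def by (simp add: sum_distrib_right sum_divide_distrib)
    also have "\<dots> < \<bar>s' - s\<bar>"
    proof -
      have "C * (\<bar>s' - s\<bar> / r) = (C / r) * \<bar>s' - s\<bar>" by simp
      moreover have "C / r < 1" using small r unfolding C_def by simp
      moreover have "\<bar>s' - s\<bar> > 0" using that by simp
      ultimately show ?thesis by (metis mult_strict_right_mono mult_1 mult.commute)
    qed
    finally show ?thesis using that unfolding l_def by linarith
  qed
  have cont: "continuous_on A l" for A
    unfolding l_def tent_def by (intro continuous_intros) (use r in auto)
  have l0: "l 0 = 0"
    unfolding l_def using tent_zero[OF r] F0 by (auto intro!: sum.neutral)
  have img: "l ` {0..} = {0..}"
  proof (intro set_eqI iffI)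
    fix y assume "y \<in> l ` {0..}"
    then obtain s where "s \<ge> 0" "y = l s" by auto
    then show "y \<in> {0..}" using sm[of 0 s] l0 by (cases "s = 0") auto
  next
    fix y :: real assume y: "y \<in> {0..}"
    have "l 0 \<le> y" using l0 y by simp
    moreover have "y \<le> l (y + C)" using dev[of "y + C"] by linarith
    ultimately obtain s where "0 \<le> s" "s \<le> y + C" "l s = y"
      using IVT'[of l 0 y "y + C"] cont y C0 by auto
    then show "y \<in> l ` {0..}" by auto
  qed
  show "time_change l"
    unfolding time_change_def using cont l0 img sm by (auto simp: strict_mono_on_def)
qed



lemma diag:
  fixes G :: "nat \<Rightarrow> nat \<Rightarrow> 'a \<Rightarrow> bool"
  assumes ev: "\<And>m. \<forall>\<^sub>F n in sequentially. \<exists>l. G n m l"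
    and base: "\<And>n. \<exists>l. G n 0 l"
    and anti: "\<And>n m m' l. m \<le> m' \<Longrightarrow> G n m' l \<Longrightarrow> G n m l"
  shows "\<exists>L. (\<forall>n. G n 0 (L n)) \<and> (\<forall>m. \<forall>\<^sub>F n in sequentially. G n m (L n))"
proof -
  have "\<forall>m. \<exists>N. \<forall>n\<ge>N. \<exists>l. G n m l" using ev unfolding eventually_sequentially by blast
  then obtain N where N: "\<And>m n. n \<ge> N m \<Longrightarrow> \<exists>l. G n m l" by metis
  define S where "S n = insert 0 {m. m \<le> n \<and> N m \<le> n}" for n
  define M where "M n = Max (S n)" for n
  have finS: "finite (S n)" for n unfolding S_def by (rule finite_insert[THEN iffD2], rule finite_subset[of _ "{..n}"]) auto
  have ex: "\<exists>l. G n (M n) l" for n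
  proof -
    have "M n \<in> S n" unfolding M_def using Max_in[OF finS] S_def by auto
    then show ?thesis using N base unfolding S_def by auto
  qed
  define L where "L n = (SOME l. G n (M n) l)" for n
  have GL: "G n (M n) (L n)" for n unfolding L_def using someI_ex[OF ex] .
  show ?thesis
  proof (intro exI conjI allI)
    fix n show "G n 0 (L n)" using anti[OF _ GL] by simp
  next
    fix m
    show "\<forall>\<^sub>F n in sequentially. G n m (L n)"
      unfolding eventually_sequentially
    proof (intro exI allI impI)
      fix n assume "max m (N m) \<le> n"
      then have "m \<in> S n" unfolding S_def by auto
      then have "m \<le> M n" unfolding M_def using Max_ge[OF finS] by auto
      then show "G n m (L n)" using anti GL by blast
    qed
  qed
qed



locale qvs =
  fixes t :: "nat \<Rightarrow> nat \<Rightarrow> real" and k :: "nat \<Rightarrow> nat"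
    and x q qc :: "real \<Rightarrow> real"
  assumes part: "partition_seq t k"
    and cad: "cadlag x"
    and conv: "\<forall>s\<ge>0. (\<lambda>n. qv_approx t k x n s) \<longlonglongrightarrow> q s"
    and qcc: "continuous_on {0..} qc" and qcm: "mono_on {0..} qc"
    and hs: "\<forall>s\<ge>0. ((\<lambda>u. (jump x u)^2) has_sum (q s - qc s)) {0..s}"
begin

abbreviation "Q \<equiv> qv_approx t k x"
abbreviation "J \<equiv> (\<lambda>u. (jump x u)^2)"
definition "inc n i = (x (t n (Suc i)) - x (t n i))^2"

lemma t0: "t n 0 = 0" using part unfolding partition_seq_def by auto
lemma tstep: "i < k n \<Longrightarrow> t n i < t n (Suc i)" using part unfolding partition_seq_def by auto

lemma t_strict: "i < j \<Longrightarrow> j \<le> k n \<Longrightarrow> t n i < t n j"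
proof (induction j)
  case 0 then show ?case by simp
next
  case (Suc j)
  then show ?case using tstep[of j n]
    by (cases "i = j") (auto simp: less_Suc_eq)
qed

lemma t_mono: "i \<le> j \<Longrightarrow> j \<le> k n \<Longrightarrow> t n i \<le> t n j"
  using t_strict[of i j n] by (cases "i = j") auto

lemma t_nonneg: "i \<le> k n \<Longrightarrow> 0 \<le> t n i"
  using t_mono[of 0 i n] t0 by simp

lemma Q_def': "Q n s = (\<Sum>i\<in>{i. i < k n \<and> t n i \<le> s}. inc n i)"
  unfolding qv_approx_def inc_def by simp

lemma inc_nonneg: "0 \<le> inc n i" unfolding inc_def by simp

lemma Q_mono: "s \<le> s' \<Longrightarrow> Q n s \<le> Q n s'"
  unfolding Q_def' by (rule sum_mono2) (auto simp: inc_nonneg)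

lemma J_nonneg: "0 \<le> J u" by simp
lemma J0: "J 0 = 0" by (simp add: jump_def)

lemma hs_diff:
  assumes "0 \<le> a" "a \<le> b"
  shows "(J has_sum (q b - qc b - (q a - qc a))) {a<..b}"
proof -
  have "{a<..b} = {0..b} - {0..a}" using assms by auto
  then show ?thesis using has_sum_Diff[OF hs[rule_format, of b] hs[rule_format, of a]] assms by auto
qed

lemma q_jump_le:
  assumes "0 \<le> a" "a < b"
  shows "q a \<le> q b - J b"
proof -
  have "J b \<le> q b - qc b - (q a - qc a)"
    using has_sum_mono2[OF has_sum_finiteI[of "{b}" "J b" J] hs_diff[of a b]] assms by auto
  moreover have "qc a \<le> qc b" using qcm assms unfolding mono_on_def by auto
  ultimately show ?thesis by simp
qed

lemma tail_small:
  assumes "0 \<le> B" "finite F" "F \<subseteq> {0..B}" "q B - qc B - sum J F \<le> e"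
    and "(J has_sum S) A" "A \<subseteq> {0..B} - F"
  shows "S \<le> e"
proof -
  have "(J has_sum (q B - qc B - sum J F)) ({0..B} - F)"
    using has_sum_Diff[OF hs[rule_format, of B] has_sum_finiteI[of F "sum J F" J]] assms by auto
  then have "S \<le> q B - qc B - sum J F"
    using has_sum_mono2[OF assms(5)] assms(6) by auto
  then show ?thesis using assms by simp
qed

lemma cell_bound:
  assumes "0 \<le> B" "finite F" "F \<subseteq> {0..B}" "q B - qc B - sum J F \<le> e"
    and "0 \<le> a" "a < b" "b \<le> B" "{a<..<b} \<inter> F = {}"
  shows "q b - J b - q a \<le> qc b - qc a + e"
proof -
  have "{a<..<b} = {a<..b} - {b}" using assms by auto
  then have "(J has_sum (q b - qc b - (q a - qc a) - J b)) {a<..<b}"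
    using has_sum_Diff[OF hs_diff[of a b] has_sum_finiteI[of "{b}" "J b" J]] assms by auto
  then have "q b - qc b - (q a - qc a) - J b \<le> e"
    by (rule tail_small[OF assms(1-4)]) (use assms in auto)
  then show ?thesis by simp
qed

lemma single_small:
  assumes "0 \<le> B" "finite F" "F \<subseteq> {0..B}" "q B - qc B - sum J F \<le> e"
    and "u \<in> {0..B}" "u \<notin> F"
  shows "J u \<le> e"
  by (rule tail_small[OF assms(1-4), of "{u}"]) (use assms in \<open>auto intro!: has_sum_finiteI\<close>)

lemma seq_right:
  fixes f :: "real \<Rightarrow> real"
  assumes hf: "(f \<longlongrightarrow> f u) (at_right u)" and hr: "r \<longlonglongrightarrow> u" and ev: "\<forall>\<^sub>F n in sequentially. u \<le> r n"
  shows "(\<lambda>n. f (r n)) \<longlonglongrightarrow> f u"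
proof (rule tendstoI)
  fix e :: real assume e: "e > 0"
  from tendstoD[OF hf e] obtain b where b: "b > u" "\<And>y. y > u \<Longrightarrow> y < b \<Longrightarrow> dist (f y) (f u) < e"
    unfolding eventually_at_right_field by auto
  have "\<forall>\<^sub>F n in sequentially. r n < b" using order_tendstoD(2)[OF hr b(1)] .
  then show "\<forall>\<^sub>F n in sequentially. dist (f (r n)) (f u) < e"
    using ev
  proof eventually_elim
    case (elim n) then show ?case using b(2)[of "r n"] e by (cases "r n = u") auto
  qed
qed

definition "idx n u = Max {i. i \<le> k n \<and> t n i < u}"

lemma idx_fin: "finite {i. i \<le> k n \<and> t n i < u}"
  by (rule finite_subset[of _ "{..k n}"]) auto

lemma idx_mem:
  assumes "0 < u" shows "idx n u \<le> k n \<and> t n (idx n u) < u"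
proof -
  have "0 \<in> {i. i \<le> k n \<and> t n i < u}" using assms t0 by auto
  then have "idx n u \<in> {i. i \<le> k n \<and> t n i < u}"
    unfolding idx_def using Max_in[OF idx_fin] by blast
  then show ?thesis by auto
qed

lemma idx_max: "i \<le> k n \<Longrightarrow> t n i < u \<Longrightarrow> i \<le> idx n u"
  unfolding idx_def by (rule Max_ge[OF idx_fin]) auto

lemma idx_next: assumes "0 < u" "idx n u < k n" shows "u \<le> t n (Suc (idx n u))"
  using idx_max[of "Suc (idx n u)" n u] assms by force

lemma idx_ev:
  assumes "0 < u" "e > 0"
  shows "\<forall>\<^sub>F n in sequentially. idx n u < k n \<and> u - e \<le> t n (idx n u) \<and> t n (Suc (idx n u)) \<le> u + e"
proof -
  have top: "filterlim (\<lambda>n. t n (k n)) at_top sequentially" using part unfolding partition_seq_def by auto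
  have e1: "\<forall>\<^sub>F n in sequentially. t n (k n) > u"
    using top by (simp add: filterlim_at_top_dense)
  have e2: "\<forall>\<^sub>F n in sequentially. \<forall>i<k n. t n i \<le> u \<longrightarrow> t n (Suc i) - t n i \<le> e"
    using part assms unfolding partition_seq_def by auto
  show ?thesis using e1 e2
  proof eventually_elim
    case (elim n)
    have m: "idx n u \<le> k n" "t n (idx n u) < u" using idx_mem[OF assms(1)] by auto
    have lt: "idx n u < k n" using m elim(1) by (metis le_neq_implies_less less_asym)
    have nx: "u \<le> t n (Suc (idx n u))" using idx_next[OF assms(1) lt] .
    have "t n (Suc (idx n u)) - t n (idx n u) \<le> e" using elim(2) lt m by auto
    then show ?case using lt nx m by auto
  qed
qed

lemma idx_lim:
  assumes "0 < u"
  shows "(\<lambda>n. t n (idx n u)) \<longlonglongrightarrow> u" "(\<lambda>n. t n (Suc (idx n u))) \<longlonglongrightarrow> u"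
    "\<forall>\<^sub>F n in sequentially. idx n u < k n"
proof -
  show "(\<lambda>n. t n (idx n u)) \<longlonglongrightarrow> u"
  proof (rule tendstoI)
    fix e :: real assume e: "e > 0"
    show "\<forall>\<^sub>F n in sequentially. dist (t n (idx n u)) u < e"
    proof -
      have "\<forall>\<^sub>F n in sequentially. idx n u < k n \<and> u - e/2 \<le> t n (idx n u) \<and> t n (Suc (idx n u)) \<le> u + e/2"
        using idx_ev[OF assms] e by simp
      then show ?thesis
        by eventually_elim (use idx_mem[OF assms] e in \<open>force simp: dist_real_def abs_if\<close>)
    qed
  qed
  show "(\<lambda>n. t n (Suc (idx n u))) \<longlonglongrightarrow> u"
  proof (rule tendstoI)
    fix e :: real assume e: "e > 0"
    show "\<forall>\<^sub>F n in sequentially. dist (t n (Suc (idx n u))) u < e"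
    proof -
      have "\<forall>\<^sub>F n in sequentially. idx n u < k n \<and> u - e/2 \<le> t n (idx n u) \<and> t n (Suc (idx n u)) \<le> u + e/2"
        using idx_ev[OF assms] e by simp
      then show ?thesis
        by eventually_elim (use idx_next[OF assms] e in \<open>force simp: dist_real_def\<close>)
    qed
  qed
  show "\<forall>\<^sub>F n in sequentially. idx n u < k n"
    using idx_ev[OF assms zero_less_one] by eventually_elim auto
qed

lemma D_lim:
  assumes "0 < u"
  shows "(\<lambda>n. inc n (idx n u)) \<longlonglongrightarrow> J u"
proof -
  have rc: "(x \<longlongrightarrow> x u) (at_right u)" using cad assms unfolding cadlag_def by auto
  obtain L where L: "(x \<longlongrightarrow> L) (at_left u)" using cad assms unfolding cadlag_def by auto
  have LL: "Lim (at_left u) x = L" using tendsto_Lim[OF _ L] by simp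
  have j: "jump x u = x u - L" using assms LL unfolding jump_def by simp
  have a: "(\<lambda>n. x (t n (Suc (idx n u)))) \<longlonglongrightarrow> x u"
    by (rule seq_right[OF rc idx_lim(2)[OF assms]])
      (use idx_lim(3)[OF assms] in \<open>eventually_elim, use idx_next[OF assms] in auto\<close>)
  have fl: "filterlim (\<lambda>n. t n (idx n u)) (at_left u) sequentially"
    by (rule tendsto_imp_filterlim_at_left[OF idx_lim(1)[OF assms]]) (use idx_mem[OF assms] in auto)
  have b: "(\<lambda>n. x (t n (idx n u))) \<longlonglongrightarrow> L" using filterlim_compose[OF L fl] .
  have "(\<lambda>n. (x (t n (Suc (idx n u))) - x (t n (idx n u)))^2) \<longlonglongrightarrow> (x u - L)^2"
    by (intro tendsto_intros a b)
  then show ?thesis unfolding inc_def j .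
qed

definition "P n u = (\<Sum>i<idx n u. inc n i)"

lemma Q_tau:
  assumes "0 < u" "idx n u < k n"
  shows "Q n (t n (idx n u)) = P n u + inc n (idx n u)"
proof -
  have "{i. i < k n \<and> t n i \<le> t n (idx n u)} = {..<Suc (idx n u)}"
  proof (intro set_eqI iffI)
    fix i assume "i \<in> {i. i < k n \<and> t n i \<le> t n (idx n u)}"
    then show "i \<in> {..<Suc (idx n u)}" using t_strict[of "idx n u" i n] by (auto simp: not_less_eq[symmetric])
  next
    fix i assume "i \<in> {..<Suc (idx n u)}"
    then show "i \<in> {i. i < k n \<and> t n i \<le> t n (idx n u)}" using assms t_mono[of i "idx n u" n] by auto
  qed
  then show ?thesis unfolding Q_def' P_def by simp
qed

lemma Q_below_tau:
  assumes "0 < u" "r < t n (idx n u)"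
  shows "Q n r \<le> P n u"
  unfolding Q_def' P_def
proof (rule sum_mono2)
  show "{i. i < k n \<and> t n i \<le> r} \<subseteq> {..<idx n u}"
  proof
    fix i assume i: "i \<in> {i. i < k n \<and> t n i \<le> r}"
    show "i \<in> {..<idx n u}"
    proof (rule ccontr)
      assume "i \<notin> {..<idx n u}"
      then have "t n (idx n u) \<le> t n i" using t_mono[of "idx n u" i n] i by auto
      then show False using i assms by auto
    qed
  qed
qed (auto simp: inc_nonneg)

lemma PD_le:
  assumes "0 < u" "idx n u < k n"
  shows "P n u + inc n (idx n u) \<le> Q n u"
  using Q_tau[OF assms] Q_mono[of "t n (idx n u)" u n] idx_mem[OF assms(1), of n] by auto

lemma min_dist:
  fixes G :: "real set"
  assumes "finite G"
  shows "\<exists>d>0. \<forall>g\<in>G. \<forall>g'\<in>G. g \<noteq> g' \<longrightarrow> d \<le> \<bar>g - g'\<bar>"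
proof -
  define D where "D = insert 1 ((\<lambda>(g,g'). \<bar>g - g'\<bar>) ` {p \<in> G \<times> G. fst p \<noteq> snd p})"
  have fD: "finite D" unfolding D_def using assms by auto
  have pos: "\<forall>y\<in>D. y > 0" unfolding D_def by auto
  have "Min D > 0" using Min_in[OF fD] pos unfolding D_def by blast
  moreover have "\<forall>g\<in>G. \<forall>g'\<in>G. g \<noteq> g' \<longrightarrow> Min D \<le> \<bar>g - g'\<bar>"
  proof (intro ballI impI)
    fix g g' assume "g \<in> G" "g' \<in> G" "g \<noteq> g'"
    then have "\<bar>g - g'\<bar> \<in> D" unfolding D_def by (auto intro!: image_eqI[of _ _ "(g,g')"])
    then show "Min D \<le> \<bar>g - g'\<bar>" using Min_le[OF fD] by blast
  qed
  ultimately show ?thesis by blast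
qed

lemma grid_cover:
  fixes h T :: real
  assumes h: "h > 0" "h \<le> 1" and T: "T \<ge> 0"
  defines "K \<equiv> nat \<lceil>(T + 1) / h\<rceil>"
  shows "\<And>j. j \<le> K \<Longrightarrow> 0 \<le> real j * h \<and> real j * h \<le> T + 2"
    and "\<And>s. 0 \<le> s \<Longrightarrow> s \<le> T \<Longrightarrow> \<exists>j\<le>K. \<exists>j'\<le>K. s - h \<le> real j * h \<and> real j * h \<le> s \<and> s < real j' * h \<and> real j' * h \<le> s + h"
proof -
  have Kle: "real K * h \<le> T + 1 + h"
  proof -
    have y0: "(T + 1) / h \<ge> 0" using T h by simp
    have "real K = of_int \<lceil>(T + 1) / h\<rceil>" unfolding K_def using y0 by simp
    then have "real K \<le> (T + 1) / h + 1" using of_int_ceiling_le_add_one[of "(T+1)/h"] by simp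
    then have "real K * h \<le> ((T + 1) / h + 1) * h" using h by (intro mult_right_mono) auto
    also have "\<dots> = T + 1 + h" using h by (simp add: field_simps)
    finally show ?thesis .
  qed
  have Kge: "T + 1 \<le> real K * h"
  proof -
    have "(T + 1) / h \<le> real K" unfolding K_def by linarith
    then show ?thesis using h by (simp add: field_simps)
  qed
  show "0 \<le> real j * h \<and> real j * h \<le> T + 2" if "j \<le> K" for j
  proof -
    have "real j * h \<le> real K * h" using that h by (intro mult_right_mono) auto
    then have "real j * h \<le> T + 2" using Kle h by linarith
    then show ?thesis using h by simp
  qed
  show "\<exists>j\<le>K. \<exists>j'\<le>K. s - h \<le> real j * h \<and> real j * h \<le> s \<and> s < real j' * h \<and> real j' * h \<le> s + h"
    if s: "0 \<le> s" "s \<le> T" for s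
  proof -
    define j where "j = nat \<lfloor>s / h\<rfloor>"
    have j1: "real j \<le> s / h" "s / h < real j + 1" unfolding j_def using s h by (auto simp: floor_less_cancel)
    have a: "real j * h \<le> s" "s < (real j + 1) * h" using j1 h by (auto simp: field_simps)
    have b: "(real j + 1) * h \<le> real K * h" using a Kge s h by (simp add: algebra_simps)
    then have "real j + 1 \<le> real K" using h by simp
    then have jK: "Suc j \<le> K" by linarith
    show ?thesis
      by (rule exI[of _ j], rule conjI, use jK in simp, rule exI[of _ "Suc j"]) (use a jK h in \<open>auto simp: algebra_simps\<close>)
  qed
qed

lemma core:
  assumes eps: "\<epsilon> > 0" and T: "T \<ge> 0"
  shows "\<forall>\<^sub>F n in sequentially. \<exists>l. time_change l \<and> (\<forall>s\<ge>0. \<bar>l s - s\<bar> \<le> \<epsilon>) \<and>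
            (\<forall>s\<in>{0..T}. \<bar>Q n (l s) - q s\<bar> \<le> \<epsilon>)"
proof -
  define e where "e = \<epsilon> / 6"
  have e: "e > 0" using eps unfolding e_def by simp
  define B where "B = T + 2"
  have B: "0 \<le> B" using T unfolding B_def by simp
  obtain F0 where F0: "finite F0" "F0 \<subseteq> {0..B}" "dist (sum J F0) (q B - qc B) \<le> e"
    using has_sum_finite_approximation[OF hs[rule_format, OF B] e] by blast
  define F where "F = F0 - {0}"
  have finF: "finite F" using F0 unfolding F_def by simp
  have FB: "F \<subseteq> {0..B}" using F0 unfolding F_def by auto
  have Fpos: "\<And>u. u \<in> F \<Longrightarrow> 0 < u" using F0 unfolding F_def by force
  have sumF: "sum J F = sum J F0"
  proof (cases "0 \<in> F0")
    case True then show ?thesis unfolding F_def using sum.remove[OF F0(1) True, of J] J0 by simp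
  next
    case False then show ?thesis unfolding F_def by simp
  qed
  have tail: "q B - qc B - sum J F \<le> e" using F0(3) sumF by (simp add: dist_real_def)
  note cb = cell_bound[OF B finF FB tail]
  note ss = single_small[OF B finF FB tail]
  have "uniformly_continuous_on {0..B} qc"
    by (rule compact_uniformly_continuous) (use continuous_on_subset[OF qcc] in auto)
  then obtain \<eta> where \<eta>: "\<eta> > 0" "\<And>a b. a \<in> {0..B} \<Longrightarrow> b \<in> {0..B} \<Longrightarrow> dist b a < \<eta> \<Longrightarrow> dist (qc b) (qc a) < e"
    unfolding uniformly_continuous_on_def using e by metis
  have qcd: "qc b - qc a \<le> e" if "0 \<le> a" "a \<le> b" "b \<le> B" "b - a < \<eta>" for a b
    using \<eta>(2)[of a b] that by (auto simp: dist_real_def)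
  define h where "h = min 1 (\<eta> / 3)"
  have h: "h > 0" "h \<le> 1" "2 * h < \<eta>" using \<eta> unfolding h_def by auto
  define K where "K = nat \<lceil>(T + 1) / h\<rceil>"
  note gc = grid_cover[OF h(1,2) T, folded K_def]
  define G where "G = F \<union> (\<lambda>j. real j * h) ` {..K}"
  have finG: "finite G" unfolding G_def using finF by simp
  have GB: "G \<subseteq> {0..B}" unfolding G_def B_def using FB gc(1) B_def by auto
  have G0: "0 \<in> G" unfolding G_def by force
  obtain d where d: "d > 0" "\<forall>g\<in>G. \<forall>g'\<in>G. g \<noteq> g' \<longrightarrow> d \<le> \<bar>g - g'\<bar>"
    using min_dist[OF finG] by blast
  define r where "r = min h (d / 2)"
  have r: "r > 0" "r \<le> h" using d h unfolding r_def by auto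
  have rsep: "2 * r \<le> \<bar>g - g'\<bar>" if "g \<in> G" "g' \<in> G" "g \<noteq> g'" for g g'
    using d(2) that unfolding r_def by force
  have FG: "F \<subseteq> G" unfolding G_def by auto
  have rF: "\<forall>u\<in>F. r \<le> \<bar>u\<bar>"
  proof
    fix u assume u: "u \<in> F"
    then have "2 * r \<le> \<bar>u - 0\<bar>" using rsep[of u 0] FG G0 Fpos[OF u] by auto
    then show "r \<le> \<bar>u\<bar>" using r by simp
  qed
  define \<delta> where "\<delta> = min e (r / 2) / (real (card F) + 1)"
  have \<delta>: "\<delta> > 0" unfolding \<delta>_def using e r by simp
  have \<delta>r: "\<delta> < r"
  proof -
    have "min e (r / 2) / (real (card F) + 1) \<le> min e (r / 2) / 1"
      by (rule divide_left_mono) (use e r in auto)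
    then show ?thesis unfolding \<delta>_def using r by linarith
  qed
  have cardd: "real (card F) * \<delta> < min e (r / 2)"
  proof -
    have "real (card F) * \<delta> = min e (r / 2) * (real (card F) / (real (card F) + 1))"
      unfolding \<delta>_def by simp
    also have "\<dots> < min e (r / 2) * 1"
      by (rule mult_strict_left_mono) (use e r in auto)
    finally show ?thesis by simp
  qed
  have evF: "\<forall>\<^sub>F n in sequentially. \<forall>u\<in>F. idx n u < k n \<and> u - \<delta> \<le> t n (idx n u)
      \<and> J u - e < inc n (idx n u) \<and> q (u - r) - e < Q n (u - r)"
  proof (rule eventually_ball_finite[OF finF], rule ballI)
    fix u assume u: "u \<in> F"
    have ur: "0 \<le> u - r" using rF u Fpos[OF u] by auto
    have c1: "\<forall>\<^sub>F n in sequentially. idx n u < k n \<and> u - \<delta> \<le> t n (idx n u) \<and> t n (Suc (idx n u)) \<le> u + \<delta>"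
      by (rule idx_ev[OF Fpos[OF u] \<delta>])
    have c2: "\<forall>\<^sub>F n in sequentially. J u - e < inc n (idx n u)"
      using order_tendstoD(1)[OF D_lim[OF Fpos[OF u]], of "J u - e"] e by simp
    have c3: "\<forall>\<^sub>F n in sequentially. q (u - r) - e < Q n (u - r)"
      using order_tendstoD(1)[OF conv[rule_format, OF ur], of "q (u - r) - e"] e by simp
    show "\<forall>\<^sub>F n in sequentially. idx n u < k n \<and> u - \<delta> \<le> t n (idx n u)
      \<and> J u - e < inc n (idx n u) \<and> q (u - r) - e < Q n (u - r)"
      using c1 c2 c3 by eventually_elim auto
  qed
  have evG: "\<forall>\<^sub>F n in sequentially. \<forall>g\<in>G. \<bar>Q n g - q g\<bar> < e"
  proof (rule eventually_ball_finite[OF finG], rule ballI)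
    fix g assume "g \<in> G"
    then have "g \<ge> 0" using GB by auto
    from tendstoD[OF conv[rule_format, OF this] e]
    show "\<forall>\<^sub>F n in sequentially. \<bar>Q n g - q g\<bar> < e" by (simp add: dist_real_def)
  qed
  show ?thesis using evF evG
  proof eventually_elim
    case (elim n)
    define c where "c u = u - t n (idx n u)" for u
    have c: "0 < c u \<and> c u \<le> \<delta>" if "u \<in> F" for u
      using elim(1) that idx_mem[OF Fpos[OF that], of n] unfolding c_def by auto
    have sumc: "(\<Sum>u\<in>F. \<bar>c u\<bar>) \<le> real (card F) * \<delta>"
      by (rule sum_bounded_above) (use c in force)
    have small: "(\<Sum>u\<in>F. \<bar>c u\<bar>) < r" using sumc cardd r by linarith
    have small2: "(\<Sum>u\<in>F. \<bar>c u\<bar>) \<le> \<epsilon>" using sumc cardd e unfolding e_def by linarith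
    define l where "l = (\<lambda>s. s - (\<Sum>u\<in>F. c u * tent r u s))"
    note tc = tent_time_change[OF finF r(1) rF small]
    have lsm: "\<And>a b. a < b \<Longrightarrow> l a < l b" unfolding l_def using tc(3) by blast
    have ltc: "time_change l" unfolding l_def using tc(1) by simp
    have ldev: "\<And>s. \<bar>l s - s\<bar> \<le> (\<Sum>u\<in>F. \<bar>c u\<bar>)" unfolding l_def using tc(2) by blast
    have lG: "l g = g" if "g \<in> G" "g \<notin> F" for g
    proof -
      have "tent r u g = 0" if "u \<in> F" for u
      proof -
        have "u \<in> G" "g \<noteq> u" using that FG \<open>g \<notin> F\<close> by auto
        then have "2 * r \<le> \<bar>g - u\<bar>" using rsep[of g u] \<open>g \<in> G\<close> by blast
        then show ?thesis using tent_zero[OF r(1), of g u] r by linarith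
      qed
      then show ?thesis unfolding l_def by simp
    qed
    have lF: "l u = t n (idx n u)" if u: "u \<in> F" for u
    proof -
      have z: "tent r v u = 0" if "v \<in> F - {u}" for v
      proof -
        have "u \<in> G" "v \<in> G" "u \<noteq> v" using that FG u by auto
        then have "2 * r \<le> \<bar>u - v\<bar>" using rsep[of u v] by blast
        then show ?thesis using tent_zero[OF r(1), of u v] r by linarith
      qed
      have "(\<Sum>v\<in>F. c v * tent r v u) = c u * tent r u u + (\<Sum>v\<in>F - {u}. c v * tent r v u)"
        using sum.remove[OF finF u] .
      also have "\<dots> = c u" using z by (simp add: tent_one)
      finally show ?thesis unfolding l_def c_def by simp
    qed
    have lmono: "l a \<le> l b" if "a \<le> b" for a b
      using lsm[of a b] that by (cases "a = b") auto
    have N1: "q g - 4 * e \<le> Q n (l g)" if g: "g \<in> G" for g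
    proof (cases "g \<in> F")
      case False
      then show ?thesis using lG[OF g False] elim(2) g e by force
    next
      case True
      note u = True
      have u0: "0 < g" using Fpos[OF u] .
      have E: "idx n g < k n" "g - \<delta> \<le> t n (idx n g)" "J g - e < inc n (idx n g)" "q (g - r) - e < Q n (g - r)"
        using elim(1) u by auto
      have "g - r < t n (idx n g)" using E(2) \<delta>r by linarith
      then have "Q n (g - r) \<le> P n g" by (rule Q_below_tau[OF u0])
      moreover have "Q n (t n (idx n g)) = P n g + inc n (idx n g)" by (rule Q_tau[OF u0 E(1)])
      moreover have ur: "0 \<le> g - r" using rF u u0 by auto
      moreover have "{g - r<..<g} \<inter> F = {}"
      proof -
        have "v \<notin> F" if "g - r < v" "v < g" for v
        proof
          assume "v \<in> F"
          then have "2 * r \<le> \<bar>g - v\<bar>" using rsep[of g v] that u FG by auto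
          then show False using that r by linarith
        qed
        then show ?thesis by auto
      qed
      then have "q g - J g - q (g - r) \<le> qc g - qc (g - r) + e"
        using cb[of "g - r" g] ur r u FB by auto
      moreover have "qc g - qc (g - r) \<le> e" using qcd[of "g - r" g] ur r h u FB by auto
      moreover have "Q n (l g) = Q n (t n (idx n g))" using lF[OF u] by simp
      ultimately show ?thesis using E by linarith
    qed
    have N2: "Q n (l s) \<le> q g - J g + 2 * e" if g: "g \<in> G" and s: "s < g" for g s
    proof (cases "g \<in> F")
      case False
      have "l s < l g" using lsm s .
      then have "Q n (l s) \<le> Q n g" using lG[OF g False] Q_mono by auto
      moreover have "J g \<le> e" using ss[of g] g GB False by auto
      ultimately show ?thesis using elim(2) g by force
    next
      case True
      note u = True
      have u0: "0 < g" using Fpos[OF u] .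
      have E: "idx n g < k n" "J g - e < inc n (idx n g)"
        using elim(1) u by auto
      have "l s < t n (idx n g)" using lsm[OF s] lF[OF u] by simp
      then have "Q n (l s) \<le> P n g" by (rule Q_below_tau[OF u0])
      moreover have "P n g + inc n (idx n g) \<le> Q n g" by (rule PD_le[OF u0 E(1)])
      moreover have "Q n g < q g + e" using elim(2) g by force
      ultimately show ?thesis using E by linarith
    qed
    show ?case
    proof (intro exI conjI)
      show "time_change l" by (rule ltc)
      show "\<forall>s\<ge>0. \<bar>l s - s\<bar> \<le> \<epsilon>"
      proof (intro allI impI)
        fix s :: real show "\<bar>l s - s\<bar> \<le> \<epsilon>" using ldev[of s] small2 by linarith
      qed
      show "\<forall>s\<in>{0..T}. \<bar>Q n (l s) - q s\<bar> \<le> \<epsilon>"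
      proof
        fix s assume s: "s \<in> {0..T}"
        obtain j j' where jj: "j \<le> K" "j' \<le> K" "s - h \<le> real j * h" "real j * h \<le> s"
          "s < real j' * h" "real j' * h \<le> s + h"
          using gc(2)[of s] s by auto
        define A where "A = {g\<in>G. g \<le> s}"
        define C where "C = {g\<in>G. s < g}"
        have jA: "real j * h \<in> A" unfolding A_def G_def using jj by auto
        have jC: "real j' * h \<in> C" unfolding C_def G_def using jj by auto
        have finA: "finite A" and finC: "finite C" unfolding A_def C_def using finG by auto
        define a where "a = Max A"
        define b where "b = Min C"
        have aA: "a \<in> A" unfolding a_def using Max_in[OF finA] jA by blast
        have bC: "b \<in> C" unfolding b_def using Min_in[OF finC] jC by blast
        have a1: "s - h \<le> a" using Max_ge[OF finA jA] jj unfolding a_def by linarith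
        have b1: "b \<le> s + h" using Min_le[OF finC jC] jj unfolding b_def by linarith
        have aG: "a \<in> G" "a \<le> s" using aA unfolding A_def by auto
        have bG: "b \<in> G" "s < b" using bC unfolding C_def by auto
        have a0: "0 \<le> a" and bB: "b \<le> B" using aG(1) bG(1) GB by auto
        have nog: "g \<notin> G" if "a < g" "g < b" for g
        proof
          assume gG: "g \<in> G"
          show False
          proof (cases "g \<le> s")
            case True
            then have "g \<in> A" unfolding A_def using gG by simp
            then have "g \<le> a" unfolding a_def by (rule Max_ge[OF finA])
            then show False using that by linarith
          next
            case False
            then have "g \<in> C" unfolding C_def using gG by simp
            then have "b \<le> g" unfolding b_def by (rule Min_le[OF finC])
            then show False using that by linarith
          qed
        qed
        have gap: "{a<..<b} \<inter> F = {}"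
        proof (rule equals0I)
          fix g assume "g \<in> {a<..<b} \<inter> F"
          then have "a < g" "g < b" "g \<in> G" using FG by auto
          then show False using nog by blast
        qed
        have ab: "a < b" using aG bG by linarith
        have cell: "q b - J b - q a \<le> qc b - qc a + e" using cb[OF a0 ab bB gap] .
        have qcab: "qc b - qc a \<le> e" by (rule qcd) (use a0 ab bB a1 b1 h in linarith)+
        have qsb: "q s \<le> q b - J b" using q_jump_le[of s b] s bG by auto
        have qas: "q a \<le> q s"
        proof (cases "a < s")
          case True
          then show ?thesis using q_jump_le[OF a0 True] J_nonneg[of s] by linarith
        next
          case False
          then show ?thesis using aG by simp
        qed
        have lo: "q a - 4 * e \<le> Q n (l s)"
          using N1[OF aG(1)] Q_mono[OF lmono[OF aG(2)], of n] by linarith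
        have hi: "Q n (l s) \<le> q b - J b + 2 * e" using N2[OF bG(1,2)] .
        show "\<bar>Q n (l s) - q s\<bar> \<le> \<epsilon>"
        proof -
          have "Q n (l s) - q s \<le> 6 * e" "q s - Q n (l s) \<le> 6 * e"
            using lo hi cell qcab qsb qas by linarith+
          then show ?thesis unfolding e_def by (simp add: abs_le_iff)
        qed
      qed
    qed
  qed
qed

end

theorem proposition2p5:
  fixes t :: "nat \<Rightarrow> nat \<Rightarrow> real" and k :: "nat \<Rightarrow> nat"
    and x q qc :: "real \<Rightarrow> real"
  assumes "partition_seq t k"
    and "cadlag x"
    and "\<forall>s\<ge>0. (\<lambda>n. qv_approx t k x n s) \<longlonglongrightarrow> q s"
    and "continuous_on {0..} qc" and "mono_on {0..} qc"
    and "\<forall>s\<ge>0. ((\<lambda>u. (jump x u)^2) has_sum (q s - qc s)) {0..s}"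
  shows "J1_tendsto (qv_approx t k x) q"
proof -
  interpret qvs t k x q qc using assms by unfold_locales auto
  define Gd where "Gd n m l \<longleftrightarrow> time_change l \<and> (m > 0 \<longrightarrow> (\<forall>s\<ge>0. \<bar>l s - s\<bar> \<le> 1 / real m) \<and>
      (\<forall>s\<in>{0..real m}. \<bar>qv_approx t k x n (l s) - q s\<bar> \<le> 1 / real m))" for n m l
  have base: "\<exists>l. Gd n 0 l" for n unfolding Gd_def using time_change_id by blast
  have ev: "\<forall>\<^sub>F n in sequentially. \<exists>l. Gd n m l" for m
  proof (cases "m = 0")
    case True then show ?thesis using base by simp
  next
    case False
    have "\<forall>\<^sub>F n in sequentially. \<exists>l. time_change l \<and> (\<forall>s\<ge>0. \<bar>l s - s\<bar> \<le> 1 / real m) \<and>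
            (\<forall>s\<in>{0..real m}. \<bar>qv_approx t k x n (l s) - q s\<bar> \<le> 1 / real m)"
      by (rule core) (use False in auto)
    then show ?thesis unfolding Gd_def by eventually_elim blast
  qed
  have anti: "Gd n m l" if "m \<le> m'" "Gd n m' l" for n m m' l
  proof (cases "m = 0")
    case True then show ?thesis using that unfolding Gd_def by simp
  next
    case False
    then have m': "m' > 0" using that by simp
    have le: "1 / real m' \<le> 1 / real m" using False that by (simp add: frac_le)
    have sub: "{0..real m} \<subseteq> {0..real m'}" using that by auto
    have G2: "time_change l" "\<forall>s\<ge>0. \<bar>l s - s\<bar> \<le> 1 / real m'"
      "\<forall>s\<in>{0..real m'}. \<bar>qv_approx t k x n (l s) - q s\<bar> \<le> 1 / real m'"
      using that(2) m' unfolding Gd_def by auto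
    have "\<forall>s\<ge>0. \<bar>l s - s\<bar> \<le> 1 / real m"
    proof (intro allI impI)
      fix s :: real assume "s \<ge> 0" then show "\<bar>l s - s\<bar> \<le> 1 / real m" using G2(2) le by force
    qed
    moreover have "\<forall>s\<in>{0..real m}. \<bar>qv_approx t k x n (l s) - q s\<bar> \<le> 1 / real m"
    proof
      fix s assume "s \<in> {0..real m}" then have "s \<in> {0..real m'}" using sub by blast
      then show "\<bar>qv_approx t k x n (l s) - q s\<bar> \<le> 1 / real m" using G2(3) le by force
    qed
    ultimately show ?thesis using G2(1) unfolding Gd_def by blast
  qed
  have "\<exists>L. (\<forall>n. Gd n 0 (L n)) \<and> (\<forall>m. \<forall>\<^sub>F n in sequentially. Gd n m (L n))"
    by (rule diag[of Gd, OF ev base]) (rule anti)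
  then obtain L where L: "\<And>n. Gd n 0 (L n)" "\<And>m. \<forall>\<^sub>F n in sequentially. Gd n m (L n)"
    by blast
  have pick: "\<exists>m>0. 1 / real m \<le> e \<and> T \<le> real m" if "e > 0" for e T :: real
  proof -
    define m where "m = Suc (nat \<lceil>max T (1 / e)\<rceil>)"
    have m1: "max T (1 / e) < real m" unfolding m_def by linarith
    then have "1 / e < real m" by simp
    then have "1 < real m * e" using that by (simp add: divide_less_eq)
    moreover have m0: "real m > 0" unfolding m_def by simp
    ultimately have "1 / real m < e" by (simp add: divide_less_eq mult.commute)
    then show ?thesis using m1 m0 by (intro exI[of _ m]) auto
  qed
  show ?thesis
    unfolding J1_tendsto_def
  proof (intro exI[of _ L] conjI allI impI)
    fix n show "time_change (L n)" using L(1) unfolding Gd_def by simp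
  next
    fix e :: real assume e: "e > 0"
    obtain m where m: "m > 0" "1 / real m \<le> e" using pick[OF e, of 0] by blast
    show "\<forall>\<^sub>F n in sequentially. \<forall>s\<ge>0. \<bar>L n s - s\<bar> \<le> e"
      using L(2)[of m]
    proof eventually_elim
      case (elim n)
      then have "\<forall>s\<ge>0. \<bar>L n s - s\<bar> \<le> 1 / real m" using m unfolding Gd_def by blast
      then show ?case using m by force
    qed
  next
    fix T e :: real assume T: "T \<ge> 0" and e: "e > 0"
    obtain m where m: "m > 0" "1 / real m \<le> e" "T \<le> real m" using pick[OF e, of T] by blast
    show "\<forall>\<^sub>F n in sequentially. \<forall>s\<in>{0..T}. \<bar>qv_approx t k x n (L n s) - q s\<bar> \<le> e"
      using L(2)[of m]
    proof eventually_elim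
      case (elim n)
      show ?case
      proof
        fix s assume s: "s \<in> {0..T}"
        then have "s \<in> {0..real m}" using m by auto
        then have "\<bar>qv_approx t k x n (L n s) - q s\<bar> \<le> 1 / real m" using elim m unfolding Gd_def by blast
        then show "\<bar>qv_approx t k x n (L n s) - q s\<bar> \<le> e" using m by linarith
      qed
    qed
  qed
qed

end
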